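(* For every integer $n\ge 4$, \[ \gamma_{2t}(K_n\Box K_{n+2})=\begin{cases}(3n+4)/2, & n\equiv 0\pmod 2,\\ (3n+3)/2, & n\equiv 1\pmod 4,\\ (3n+5)/2, & n\equiv 3\pmod 4.\end{cases} \]
   Context: For a graph $G=(V,E)$, a set $S\subseteq V$ is a total $2$-dominating set if every vertex of $V$ (including those in $S$) is adjacent to at least $2$ vertices of $S$; $\gamma_{2t}(G)$ is the minimum cardinality of such a set. $G\Box H$ denotes the Cartesian product: vertex set $V(G)\times V(H)$, with $(u_1,v_1)\sim(u_2,v_2)$ iff either $u_1=u_2$ and $v_1\sim v_2$, or $v_1=v_2$ and $u_1\sim u_2$. $K_n$ is the complete graph on $n$ vertices. *)

theory Defs
  imports Main
begin

text \<open>A (finite simple) graph is given by a vertex set V and a symmetric,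
irreflexive adjacency relation adj.\<close>

definition total_k_dominating :: "'a set \<Rightarrow> ('a \<Rightarrow> 'a \<Rightarrow> bool) \<Rightarrow> nat \<Rightarrow> 'a set \<Rightarrow> bool" where
  "total_k_dominating V adj k S \<longleftrightarrow>
     S \<subseteq> V \<and> (\<forall>v\<in>V. card {u\<in>S. adj v u} \<ge> k)"

definition total_k_domination_number :: "'a set \<Rightarrow> ('a \<Rightarrow> 'a \<Rightarrow> bool) \<Rightarrow> nat \<Rightarrow> nat" where
  "total_k_domination_number V adj k = (LEAST m. \<exists>S. total_k_dominating V adj k S \<and> card S = m)"

definition complete_verts :: "nat \<Rightarrow> nat set" where
  "complete_verts n = {0..<n}"

definition complete_adj :: "nat \<Rightarrow> nat \<Rightarrow> bool" where
  "complete_adj u v \<longleftrightarrow> u \<noteq> v"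

definition cart_verts :: "'a set \<Rightarrow> 'b set \<Rightarrow> ('a \<times> 'b) set" where
  "cart_verts V W = V \<times> W"

definition cart_adj :: "('a \<Rightarrow> 'a \<Rightarrow> bool) \<Rightarrow> ('b \<Rightarrow> 'b \<Rightarrow> bool) \<Rightarrow> ('a \<times> 'b) \<Rightarrow> ('a \<times> 'b) \<Rightarrow> bool" where
  "cart_adj adjG adjH p q \<longleftrightarrow>
     (fst p = fst q \<and> adjH (snd p) (snd q)) \<or> (snd p = snd q \<and> adjG (fst p) (fst q))"

end

theory Submission imports Defs Complex_Main begin

definition good :: "nat \<Rightarrow> nat \<Rightarrow> (nat \<times> nat) set \<Rightarrow> bool" where
 "good a b S \<longleftrightarrow> S \<subseteq> {0..<a} \<times> {0..<b} \<and> (\<forall>i<a. \<exists>j. (i,j) \<in> S) \<and> (\<forall>j<b. \<exists>i. (i,j) \<in> S)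
   \<and> (\<forall>v\<in>S. \<exists>u1\<in>S. \<exists>u2\<in>S. u1 \<noteq> u2 \<and> u1 \<noteq> v \<and> u2 \<noteq> v \<and> (fst u1 = fst v \<or> snd u1 = snd v)
        \<and> (fst u2 = fst v \<or> snd u2 = snd v))"

lemma adj_eq: "cart_adj complete_adj complete_adj v u \<longleftrightarrow> u \<noteq> v \<and> (fst u = fst v \<or> snd u = snd v)"
  unfolding cart_adj_def complete_adj_def by (cases u; cases v) auto

lemma good_dom: assumes "good a b S"
  shows "total_k_dominating (cart_verts (complete_verts a) (complete_verts b)) (cart_adj complete_adj complete_adj) 2 S"
proof -
  have sub: "S \<subseteq> {0..<a} \<times> {0..<b}" using assms unfolding good_def by blast
  have fin: "finite S" using sub finite_subset by blast
  have "card {u\<in>S. cart_adj complete_adj complete_adj v u} \<ge> 2" if v: "v \<in> {0..<a} \<times> {0..<b}" for v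
  proof (cases "v \<in> S")
    case True
    then obtain u1 u2 where u: "u1\<in>S" "u2\<in>S" "u1 \<noteq> u2" "u1 \<noteq> v" "u2 \<noteq> v" "fst u1 = fst v \<or> snd u1 = snd v"
       "fst u2 = fst v \<or> snd u2 = snd v" using assms unfolding good_def by blast
    have "{u1,u2} \<subseteq> {u\<in>S. cart_adj complete_adj complete_adj v u}" using u by (auto simp: adj_eq)
    from card_mono[OF _ this] show ?thesis using fin u(3) by auto
  next
    case False
    obtain v1 v2 where vv: "v = (v1,v2)" by (cases v)
    obtain j where j: "(v1,j) \<in> S" using assms v vv unfolding good_def by auto
    obtain i where i: "(i,v2) \<in> S" using assms v vv unfolding good_def by auto
    have "{(v1,j),(i,v2)} \<subseteq> {u\<in>S. cart_adj complete_adj complete_adj v u}" using i j False vv by (auto simp: adj_eq)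
    moreover have "(v1,j) \<noteq> (i,v2)" using i j False vv by auto
    ultimately show ?thesis using card_mono[of "{u\<in>S. cart_adj complete_adj complete_adj v u}" "{(v1,j),(i,v2)}"] fin by auto
  qed
  then show ?thesis unfolding total_k_dominating_def cart_verts_def complete_verts_def using sub by auto
qed

definition blk :: "nat \<Rightarrow> nat \<Rightarrow> (nat \<times> nat) set" where
 "blk a b = {(a,b),(a+1,b),(a+2,b),(a+3,b+1),(a+3,b+2),(a+3,b+3)}"

lemma blk_card: "card (blk a b) = 6" unfolding blk_def by simp

lemma good_step: assumes "good a b S" shows "good (a+4) (b+4) (S \<union> blk a b)"
  and "card (S \<union> blk a b) = card S + 6"
proof -
  have sub: "S \<subseteq> {0..<a} \<times> {0..<b}" using assms unfolding good_def by blast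
  have fin: "finite S" using sub finite_subset by blast
  have disj: "S \<inter> blk a b = {}" using sub unfolding blk_def by auto
  show "card (S \<union> blk a b) = card S + 6" using card_Un_disjoint[OF fin _ disj] blk_card
    by (simp add: blk_def)
  have r: "\<forall>i<a+4. \<exists>j. (i,j) \<in> S \<union> blk a b"
  proof (intro allI impI)
    fix i assume "i < a+4"
    then consider "i < a" | "i = a" | "i = a+1" | "i=a+2" | "i=a+3" by linarith
    then show "\<exists>j. (i,j) \<in> S \<union> blk a b" using assms unfolding good_def blk_def by cases auto
  qed
  have c: "\<forall>j<b+4. \<exists>i. (i,j) \<in> S \<union> blk a b"
  proof (intro allI impI)
    fix j assume "j < b+4"
    then consider "j < b" | "j = b" | "j = b+1" | "j=b+2" | "j=b+3" by linarith
    then show "\<exists>i. (i,j) \<in> S \<union> blk a b" using assms unfolding good_def blk_def by cases auto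
  qed
  have w: "\<forall>v\<in>S \<union> blk a b. \<exists>u1\<in>S \<union> blk a b. \<exists>u2\<in>S \<union> blk a b. u1 \<noteq> u2 \<and> u1 \<noteq> v \<and> u2 \<noteq> v \<and> (fst u1 = fst v \<or> snd u1 = snd v)
        \<and> (fst u2 = fst v \<or> snd u2 = snd v)"
  proof
    fix v assume "v \<in> S \<union> blk a b"
    then consider "v \<in> S" | "v = (a,b)" | "v = (a+1,b)" | "v = (a+2,b)" | "v = (a+3,b+1)" | "v = (a+3,b+2)" | "v = (a+3,b+3)"
      unfolding blk_def by blast
    then show "\<exists>u1\<in>S \<union> blk a b. \<exists>u2\<in>S \<union> blk a b. u1 \<noteq> u2 \<and> u1 \<noteq> v \<and> u2 \<noteq> v \<and> (fst u1 = fst v \<or> snd u1 = snd v)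
        \<and> (fst u2 = fst v \<or> snd u2 = snd v)"
    proof cases
      case 1 then show ?thesis using assms unfolding good_def by blast
    next
      case 2 then show ?thesis unfolding blk_def by (intro bexI[of _ "(a+1,b)"] bexI[of _ "(a+2,b)"]) auto
    next
      case 3 then show ?thesis unfolding blk_def by (intro bexI[of _ "(a,b)"] bexI[of _ "(a+2,b)"]) auto
    next
      case 4 then show ?thesis unfolding blk_def by (intro bexI[of _ "(a+1,b)"] bexI[of _ "(a,b)"]) auto
    next
      case 5 then show ?thesis unfolding blk_def by (intro bexI[of _ "(a+3,b+2)"] bexI[of _ "(a+3,b+3)"]) auto
    next
      case 6 then show ?thesis unfolding blk_def by (intro bexI[of _ "(a+3,b+1)"] bexI[of _ "(a+3,b+3)"]) auto
    next
      case 7 then show ?thesis unfolding blk_def by (intro bexI[of _ "(a+3,b+2)"] bexI[of _ "(a+3,b+1)"]) auto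
    qed
  qed
  show "good (a+4) (b+4) (S \<union> blk a b)" unfolding good_def using r c w sub unfolding blk_def by auto
qed

lemma base4: "good 4 6 {(0,0),(1,0),(2,0),(2,1),(2,2),(3,3),(3,4),(3,5)}"
  unfolding good_def by (auto simp: less_Suc_eq numeral_eq_Suc)

lemma base5: "good 5 7 {(0,0),(1,0),(2,0),(3,1),(3,2),(3,3),(4,4),(4,5),(4,6)}"
  unfolding good_def by (auto simp: less_Suc_eq numeral_eq_Suc)
lemma base6: "good 6 8 {(0,0),(1,0),(2,0),(3,0),(4,1),(4,2),(4,3),(5,4),(5,5),(5,6),(5,7)}"
  unfolding good_def by (auto simp: less_Suc_eq numeral_eq_Suc)
lemma base7: "good 7 9 {(0,0),(1,0),(2,1),(3,1),(4,0),(4,2),(4,3),(5,1),(5,4),(5,5),(6,6),(6,7),(6,8)}"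
  unfolding good_def by (auto simp: less_Suc_eq numeral_eq_Suc)

definition fval :: "nat \<Rightarrow> nat" where
 "fval n = (if even n then (3 * n + 4) div 2
          else if n mod 4 = 1 then (3 * n + 3) div 2
          else (3 * n + 5) div 2)"

lemma fval_step: "fval (n+4) = fval n + 6"
proof -
  have a: "even (n+4) = even n" by simp
  have b: "(n+4) mod 4 = n mod 4" by simp
  show ?thesis unfolding fval_def a b by auto
qed

lemma exists_good: "r \<in> {4,5,6,7} \<Longrightarrow> \<exists>S. good (r+4*q) (r+4*q+2) S \<and> card S = fval (r+4*q)"
proof (induction q)
  case 0
  then consider "r=4" | "r=5" | "r=6" | "r=7" by auto
  then show ?case
  proof cases
    case 1 then show ?thesis using base4 by (intro exI[of _ "{(0,0),(1,0),(2,0),(2,1),(2,2),(3,3),(3,4),(3,5)}"]) (simp add: fval_def)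
  next
    case 2 then show ?thesis using base5 by (intro exI[of _ "{(0,0),(1,0),(2,0),(3,1),(3,2),(3,3),(4,4),(4,5),(4,6)}"]) (simp add: fval_def)
  next
    case 3 then show ?thesis using base6 by (intro exI[of _ "{(0,0),(1,0),(2,0),(3,0),(4,1),(4,2),(4,3),(5,4),(5,5),(5,6),(5,7)}"]) (simp add: fval_def)
  next
    case 4 then show ?thesis using base7 by (intro exI[of _ "{(0,0),(1,0),(2,1),(3,1),(4,0),(4,2),(4,3),(5,1),(5,4),(5,5),(6,6),(6,7),(6,8)}"]) (simp add: fval_def)
  qed
next
  case (Suc q)
  then obtain S where S: "good (r+4*q) (r+4*q+2) S" "card S = fval (r+4*q)" by blast
  have e: "r + 4 * Suc q = (r+4*q) + 4" "r + 4 * Suc q + 2 = (r+4*q+2) + 4" by simp_all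
  have "good (r + 4 * Suc q) (r + 4 * Suc q + 2) (S \<union> blk (r+4*q) (r+4*q+2))"
  proof -
    have g: "good (r+4*q+4) (r+4*q+2+4) (S \<union> blk (r+4*q) (r+4*q+2))" by (rule good_step(1)[OF S(1)])
    have e1: "r+4*q+4 = r + 4*Suc q" "r+4*q+2+4 = r+4*Suc q+2" by simp_all
    show ?thesis using g unfolding e1 .
  qed
  moreover have "card (S \<union> blk (r+4*q) (r+4*q+2)) = fval (r + 4 * Suc q)"
    unfolding e(1) fval_step good_step(2)[OF S(1)] S(2) ..
  ultimately show ?case by blast
qed

lemma exists_good': "n \<ge> 4 \<Longrightarrow> \<exists>S. good n (n+2) S \<and> card S = fval n"
proof -
  assume n: "n \<ge> 4"
  define q where "q = (n - 4) div 4"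
  define r where "r = 4 + (n - 4) mod 4"
  have "n = r + 4*q" "r \<in> {4,5,6,7}" using n unfolding q_def r_def by auto
  then show ?thesis using exists_good by metis
qed



lemma card_group: "finite S \<Longrightarrow> finite T \<Longrightarrow> g ` S \<subseteq> T \<Longrightarrow> card S = (\<Sum>t\<in>T. card {x\<in>S. g x = t})"
  using sum.group[of S T g "\<lambda>_. (1::nat)"] by simp

lemma nbr_card: assumes "finite S"
  shows "card {u\<in>S. cart_adj complete_adj complete_adj v u} =
    card ({u\<in>S. fst u = fst v} - {v}) + card ({u\<in>S. snd u = snd v} - {v})"
proof -
  have "{u\<in>S. cart_adj complete_adj complete_adj v u} = ({u\<in>S. fst u = fst v} - {v}) \<union> ({u\<in>S. snd u = snd v} - {v})"
    by (auto simp: adj_eq)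
  moreover have "({u\<in>S. fst u = fst v} - {v}) \<inter> ({u\<in>S. snd u = snd v} - {v}) = {}"
    by (auto simp: prod_eq_iff)
  ultimately show ?thesis using assms by (simp add: card_Un_disjoint)
qed

lemma pt: fixes r c :: nat assumes "r \<ge> 1" "c \<ge> 1" "r + c \<ge> 4"
  shows "1/real r + 1/real c \<le> 4/3" "1/real r + 1/real c = 4/3 \<Longrightarrow> (r=1 \<and> c=3) \<or> (r=3 \<and> c=1)"
proof -
  have "(1/real r + 1/real c \<le> 4/3) \<and> (1/real r + 1/real c = 4/3 \<longrightarrow> (r=1 \<and> c=3) \<or> (r=3 \<and> c=1))"
  proof -
    consider "r = 1" | "r = 2" | "r = 3" | "r \<ge> 4" using assms by linarith
    then show ?thesis
    proof cases
      case 1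
      then have "c \<ge> 3" using assms by simp
      then have "1/real c \<le> 1/3" by (simp add: field_simps)
      moreover have "c \<noteq> 3 \<Longrightarrow> 1/real c < 1/3" using \<open>c\<ge>3\<close> by (simp add: field_simps)
      ultimately show ?thesis using 1 by force
    next
      case 2
      then have "c \<ge> 2" using assms by simp
      then have "1/real c \<le> 1/2" by (simp add: field_simps)
      then show ?thesis using 2 by simp
    next
      case 3
      have "1/real c \<le> 1" using assms by (simp add: field_simps)
      moreover have "c \<noteq> 1 \<Longrightarrow> 1/real c \<le> 1/2" using assms by (simp add: field_simps)
      ultimately show ?thesis using 3 by force
    next
      case 4
      have "1/real c \<le> 1" using assms by (simp add: field_simps)
      moreover have "1/real r \<le> 1/4" using 4 by (simp add: field_simps)
      ultimately show ?thesis by linarith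
    qed
  qed
  then show "1/real r + 1/real c \<le> 4/3" "1/real r + 1/real c = 4/3 \<Longrightarrow> (r=1 \<and> c=3) \<or> (r=3 \<and> c=1)" by auto
qed

lemma recip_sum: fixes g :: "nat\<times>nat \<Rightarrow> nat"
  assumes fin: "finite S" and sub: "g ` S \<subseteq> {0..<m}" and pos: "\<And>i. i < m \<Longrightarrow> card {u\<in>S. g u = i} \<ge> 1"
  shows "(\<Sum>u\<in>S. 1 / real (card {x\<in>S. g x = g u})) = real m"
proof -
  have "(\<Sum>u\<in>S. 1 / real (card {x\<in>S. g x = g u})) = (\<Sum>i\<in>{0..<m}. \<Sum>u\<in>{x\<in>S. g x = i}. 1 / real (card {x\<in>S. g x = g u}))"
    by (rule sum.group[OF fin finite_atLeastLessThan sub, symmetric])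
  also have "\<dots> = (\<Sum>i\<in>{0..<m}. \<Sum>u\<in>{x\<in>S. g x = i}. 1 / real (card {x\<in>S. g x = i}))"
    by (intro sum.cong refl) auto
  also have "\<dots> = (\<Sum>i\<in>{0..<m}. 1)"
  proof (intro sum.cong refl)
    fix i assume "i \<in> {0..<m}"
    then have "card {x\<in>S. g x = i} \<ge> 1" using pos by auto
    then show "(\<Sum>u\<in>{x\<in>S. g x = i}. 1 / real (card {x\<in>S. g x = i})) = 1" by simp
  qed
  finally show ?thesis by simp
qed

lemma lower: assumes n: "n \<ge> 4"
  and dom: "total_k_dominating (cart_verts (complete_verts n) (complete_verts (n + 2))) (cart_adj complete_adj complete_adj) 2 S"
  shows "fval n \<le> card S"
proof -
  let ?V = "{0..<n} \<times> {0..<n+2}"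
  have sub: "S \<subseteq> ?V" and dm: "\<And>v. v \<in> ?V \<Longrightarrow> card {u\<in>S. cart_adj complete_adj complete_adj v u} \<ge> 2"
    using dom unfolding total_k_dominating_def cart_verts_def complete_verts_def by auto
  have fin: "finite S" using sub finite_subset by blast
  define r where "r i = card {u\<in>S. fst u = i}" for i
  define c where "c j = card {u\<in>S. snd u = j}" for j
  have fstS: "fst ` S \<subseteq> {0..<n}" and sndS: "snd ` S \<subseteq> {0..<n+2}" using sub by auto
  have rsum: "card S = (\<Sum>i\<in>{0..<n}. r i)" unfolding r_def by (rule card_group[OF fin _ fstS]) simp
  have csum: "card S = (\<Sum>j\<in>{0..<n+2}. c j)" unfolding c_def by (rule card_group[OF fin _ sndS]) simp
  have fvle: "fval n \<le> 2 * n" using n unfolding fval_def by auto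
  show ?thesis
  proof (cases "\<exists>i<n. r i = 0")
    case True
    then obtain i where i: "i < n" "r i = 0" by blast
    have "c j \<ge> 2" if j: "j < n+2" for j
    proof -
      have e: "{u\<in>S. fst u = i} = {}" using i fin unfolding r_def by simp
      have "(i,j) \<notin> S" using e by auto
      then have "card ({u\<in>S. snd u = j} - {(i,j)}) = c j" unfolding c_def by simp
      then show ?thesis using dm[of "(i,j)"] i j nbr_card[OF fin, of "(i,j)"] e by simp
    qed
    then have "(\<Sum>j\<in>{0..<n+2}. (2::nat)) \<le> (\<Sum>j\<in>{0..<n+2}. c j)" by (intro sum_mono) auto
    then show ?thesis using csum fvle by simp
  next
    case False
    note rpos = this
    show ?thesis
    proof (cases "\<exists>j<n+2. c j = 0")
      case True
      then obtain j where j: "j < n+2" "c j = 0" by blast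
      have "r i \<ge> 2" if i: "i < n" for i
      proof -
        have e: "{u\<in>S. snd u = j} = {}" using j fin unfolding c_def by simp
        have "(i,j) \<notin> S" using e by auto
        then have "card ({u\<in>S. fst u = i} - {(i,j)}) = r i" unfolding r_def by simp
        then show ?thesis using dm[of "(i,j)"] i j nbr_card[OF fin, of "(i,j)"] e by simp
      qed
      then have "(\<Sum>i\<in>{0..<n}. (2::nat)) \<le> (\<Sum>i\<in>{0..<n}. r i)" by (intro sum_mono) auto
      then show ?thesis using rsum fvle by simp
    next
      case False
      note cpos = this
      have r1: "r (fst u) \<ge> 1" and c1: "c (snd u) \<ge> 1" and rc: "r (fst u) + c (snd u) \<ge> 4" if u: "u \<in> S" for u
      proof -
        show "r (fst u) \<ge> 1" using rpos u fstS by force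
        show "c (snd u) \<ge> 1" using cpos u sndS by force
        have "card ({x\<in>S. fst x = fst u} - {u}) = r (fst u) - 1" unfolding r_def using u fin by simp
        moreover have "card ({x\<in>S. snd x = snd u} - {u}) = c (snd u) - 1" unfolding c_def using u fin by simp
        ultimately show "r (fst u) + c (snd u) \<ge> 4"
          using dm[of u] u sub nbr_card[OF fin, of u] \<open>r (fst u) \<ge> 1\<close> \<open>c (snd u) \<ge> 1\<close> by auto
      qed
      have R: "(\<Sum>u\<in>S. 1 / real (r (fst u))) = real n"
        unfolding r_def by (rule recip_sum[OF fin fstS]) (use rpos in \<open>auto simp: r_def\<close>)
      have C: "(\<Sum>u\<in>S. 1 / real (c (snd u))) = real (n+2)"
        unfolding c_def by (rule recip_sum[OF fin sndS]) (use cpos in \<open>auto simp: c_def\<close>)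
      define w where "w u = 4/3 - (1 / real (r (fst u)) + 1 / real (c (snd u)))" for u
      have wnn: "w u \<ge> 0" if "u \<in> S" for u using pt(1)[OF r1 c1 rc, OF that that that] unfolding w_def by simp
      have W: "(\<Sum>u\<in>S. w u) = 4/3 * real (card S) - real (2*n+2)"
        unfolding w_def sum_subtractf sum.distrib R C by simp
      have "(\<Sum>u\<in>S. w u) \<ge> 0" using wnn by (simp add: sum_nonneg)
      then have base: "3*n+3 \<le> 2 * card S" using W by linarith
      have "even n \<or> n mod 4 = 1 \<or> n mod 4 = 3" by presburger
      then consider "even n" | "n mod 4 = 1" | "n mod 4 = 3" by blast
      then show ?thesis
      proof cases
        case 1 then show ?thesis using base unfolding fval_def by presburger
      next
        case 2 then have "odd n" by presburger
        then show ?thesis using base 2 unfolding fval_def by presburger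
      next
        case 3
        have "2 * card S \<noteq> 3*n+3"
        proof
          assume eq: "2 * card S = 3*n+3"
          then have "(\<Sum>u\<in>S. w u) = 0" using W by simp
          then have w0: "\<forall>u\<in>S. w u = 0" using sum_nonneg_eq_0_iff[OF fin] wnn by blast
          have tys: "(r (fst u) = 1 \<and> c (snd u) = 3) \<or> (r (fst u) = 3 \<and> c (snd u) = 1)" if "u\<in>S" for u
            using pt(2)[OF r1 c1 rc, OF that that that] w0 that unfolding w_def by simp
          define A where "A = {u\<in>S. r (fst u) = 1}"
          define B where "B = {u\<in>S. r (fst u) \<noteq> 1}"
          have SAB: "S = A \<union> B" and dis: "A \<inter> B = {}" unfolding A_def B_def by auto
          have fA: "finite A" and fB: "finite B" unfolding A_def B_def using fin by auto
          have AB: "card S = card A + card B" using card_Un_disjoint[OF fA fB dis] SAB by simp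
          have "(\<Sum>u\<in>S. 1 / real (r (fst u))) = (\<Sum>u\<in>S. if r (fst u) = 1 then 1 else 1/3)"
          proof (intro sum.cong refl)
            fix u assume "u \<in> S"
            from tys[OF this] show "1 / real (r (fst u)) = (if r (fst u) = 1 then 1 else 1/3)" by auto
          qed
          also have "\<dots> = real (card A) + real (card B) / 3"
            unfolding sum.If_cases[OF fin] A_def B_def by (simp add: Int_def)
          finally have "real n = real (card A) + real (card B) / 3" using R by simp
          then have "3 * n = 3 * card A + card B" by linarith
          then have "3 * n = 4 * card A + 3" using eq AB by linarith
          then show False using 3 by presburger
        qed
        moreover have "even (2 * card S)" by simp
        ultimately have "3*n+5 \<le> 2 * card S" using base 3 by presburger
        then show ?thesis using 3 unfolding fval_def by presburger
      qed
    qed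
  qed
qed


theorem theorem15:
  fixes n :: nat
  assumes "n \<ge> 4"
  shows "total_k_domination_number
           (cart_verts (complete_verts n) (complete_verts (n + 2)))
           (cart_adj complete_adj complete_adj) 2 =
         (if even n then (3 * n + 4) div 2
          else if n mod 4 = 1 then (3 * n + 3) div 2
          else (3 * n + 5) div 2)"
proof -
  obtain S where S: "good n (n+2) S" "card S = fval n" using exists_good'[OF assms] by blast
  have "total_k_domination_number
           (cart_verts (complete_verts n) (complete_verts (n + 2)))
           (cart_adj complete_adj complete_adj) 2 = fval n"
    unfolding total_k_domination_number_def
  proof (rule Least_equality)
    show "\<exists>S. total_k_dominating (cart_verts (complete_verts n) (complete_verts (n + 2))) (cart_adj complete_adj complete_adj) 2 S \<and> card S = fval n"
      using good_dom[OF S(1)] S(2) by blast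
  next
    fix m assume "\<exists>S. total_k_dominating (cart_verts (complete_verts n) (complete_verts (n + 2))) (cart_adj complete_adj complete_adj) 2 S \<and> card S = m"
    then show "fval n \<le> m" using lower[OF assms] by blast
  qed
  then show ?thesis unfolding fval_def .
qed

end
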